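(* Let $R:=\sqrt{D}$, let $x_{0}=R^{-1}\beta$, and let $p_{0}=q_{0}=0$. For every $k\in\mathbb{N}$, consider the routine \[ y_{k}=\operatorname{proj}_{R\mathcal{P}_{3}}(x_{k}+p_{k}),\quad p_{k+1}=x_{k}+p_{k}-y_{k},\quad x_{k+1}=\operatorname{proj}_{R\Delta_{N}}(y_{k}+q_{k}),\quad q_{k+1}=y_{k}+q_{k}-x_{k+1}. \] Then $(x_{k})$ converges to a point $q$ and $p=R^{-1}q$ is the solution to the problem \[ \min_{p\in\mathcal{P}} \tfrac{1}{2}p^{\top}Dp-p^{\top}\beta \] with $\mathcal{P}=\{p\in\Delta_{N}\,:\,\mu_{-}\leq \sum_{i=1}^{N}p_{i}\xi_{i}\leq\mu_{+}\}$.
   Context: $\mathcal{H}$ is a real Hilbert space, $\lambda>0$, $a_{i}\in\mathcal{H}\setminus\{0\}$ and $\xi_{i}\in\mathbb{R}$ for $i=1,\ldots,N$, $\mathbf{x}=(x_1,\ldots,x_N)\in\mathcal{H}^N$. $D:=\mathrm{diag}(\lambda\|a_{1}\|^{2},\ldots,\lambda\|a_{N}\|^{2})$ (a positive definite diagonal matrix) and $\beta:=(\langle a_{i},x_{i}\rangle+\xi_{i})_{i=1}^{N}\in\mathbb{R}^N$. $\Delta_{N}=\{p\in\mathbb{R}^{N}_{+}:\sum_{i=1}^{N}p_{i}=1\}$ is the probability simplex, $\mathcal{P}_{1}=\{p\in\mathbb{R}^{N}:\sum_{i=1}^N p_i=1\}$, $\mathcal{P}_{3}=\{p\in\mathbb{R}^{N}\,:\,\mu_{-}\leq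 \sum_{i=1}^{N}p_{i}\xi_{i}\leq\mu_{+}\}$ with $\mu_{-},\mu_{+}\in\mathbb{R}$ such that $\mathrm{int}(\mathbb{R}^{N}_{+})\cap\mathrm{int}(\mathcal{P}_{3})\cap\mathcal{P}_{1}\neq\emptyset$. $\operatorname{proj}_{C}$ denotes the Euclidean projection onto a set $C$, and $RC=\{Rp:p\in C\}$. *)

theory Defs
  imports "HOL-Analysis.Analysis"
begin

text \<open>Vectors in R^N are modelled as real^'n with a finite index type 'n (N = CARD('n)).
  The Euclidean projection onto a (closed convex) set C is the library's closest_point C.\<close>

definition prob_simplex :: "(real^'n) set" where
  "prob_simplex = {p. (\<forall>i. 0 \<le> p$i) \<and> (\<Sum>i\<in>UNIV. p$i) = 1}"

definition P1 :: "(real^'n) set" where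
  "P1 = {p. (\<Sum>i\<in>UNIV. p$i) = 1}"

definition P3 :: "('n \<Rightarrow> real) \<Rightarrow> real \<Rightarrow> real \<Rightarrow> (real^'n) set" where
  "P3 \<xi> mum mup = {p. mum \<le> (\<Sum>i\<in>UNIV. p$i * \<xi> i) \<and> (\<Sum>i\<in>UNIV. p$i * \<xi> i) \<le> mup}"

definition nonneg_orthant :: "(real^'n) set" where
  "nonneg_orthant = {p. \<forall>i. 0 \<le> p$i}"

definition diag_mult :: "('n \<Rightarrow> real) \<Rightarrow> real^'n \<Rightarrow> real^'n" where
  "diag_mult d p = (\<chi> i. d i * p$i)"

definition quad_obj :: "('n \<Rightarrow> real) \<Rightarrow> real^'n \<Rightarrow> real^'n \<Rightarrow> real" where
  "quad_obj d \<beta> p = (1/2) * (p \<bullet> diag_mult d p) - p \<bullet> \<beta>"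

end

theory Submission
  imports Defs
begin

lemma harmonic_liminf:
  fixes e :: "nat \<Rightarrow> real"
  assumes e0: "\<And>k. 0 \<le> e k" and se: "summable e"
  shows "\<exists>k\<ge>n. real (Suc k) * e k < 1 / real (Suc n)"
proof (rule ccontr)
  assume "\<not> ?thesis"
  then have H: "\<And>k. k \<ge> n \<Longrightarrow> 1 / real (Suc n) \<le> real (Suc k) * e k" by (meson not_less)
  have "summable (\<lambda>k. real (Suc n) * e k)" using se by (rule summable_mult)
  then have "summable (\<lambda>k. inverse (real (Suc k)))"
  proof (rule summable_comparison_test'[where N=n])
    fix k assume "n \<le> k"
    from H[OF this] have "1 \<le> real (Suc n) * (real (Suc k) * e k)"
      by (simp add: field_simps)
    then show "norm (inverse (real (Suc k))) \<le> real (Suc n) * e k"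
      by (simp add: field_simps)
  qed
  then have "summable (\<lambda>k. inverse (real k))"
    using summable_Suc_iff[where f="\<lambda>k. inverse (real k)"] by simp
  then show False using not_summable_harmonic[where 'a=real] by simp
qed

lemma dykstra:
  fixes A B :: "'a::euclidean_space set" and x y p q :: "nat \<Rightarrow> 'a"
  assumes cA: "closed A" "convex A" and cB: "closed B" "convex B" and ne: "A \<inter> B \<noteq> {}"
    and p0: "p 0 = 0" and q0: "q 0 = 0"
    and ys: "\<And>k. y k = closest_point A (x k + p k)"
    and ps: "\<And>k. p (Suc k) = x k + p k - y k"
    and xs: "\<And>k. x (Suc k) = closest_point B (y k + q k)"
    and qs: "\<And>k. q (Suc k) = y k + q k - x (Suc k)"
  shows "\<exists>l. x \<longlonglongrightarrow> l \<and> l \<in> A \<inter> B \<and> (\<forall>z\<in>A \<inter> B. dist (x 0) l \<le> dist (x 0) z)"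
proof -
  have inv: "x k + p k + q k = x 0" for k
    by (induction k) (simp_all add: p0 q0 ps qs algebra_simps)
  have yA: "y k \<in> A" for k using ys closest_point_in_set cA ne by auto
  have xB: "x (Suc k) \<in> B" for k using xs closest_point_in_set cB ne by auto
  have NA: "inner (p k) (a - y (k - 1)) \<le> 0" if "a \<in> A" for k a
  proof (cases k)
    case 0 then show ?thesis by (simp add: p0)
  next
    case (Suc j)
    have "inner ((x j + p j) - closest_point A (x j + p j)) (a - closest_point A (x j + p j)) \<le> 0"
      by (rule closest_point_dot[OF cA(2) cA(1) that])
    then show ?thesis using Suc by (simp add: ps ys)
  qed
  have NB: "inner (q k) (b - x k) \<le> 0" if "b \<in> B" for k b
  proof (cases k)
    case 0 then show ?thesis by (simp add: q0)
  next
    case (Suc j)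
    have "inner ((y j + q j) - closest_point B (y j + q j)) (b - closest_point B (y j + q j)) \<le> 0"
      by (rule closest_point_dot[OF cB(2) cB(1) that])
    then show ?thesis using Suc by (simp add: qs xs)
  qed
  define \<Phi> where "\<Phi> k = norm (x k)^2/2 + inner (p k) (y (k-1)) + inner (q k) (x k)" for k
  define \<Psi> where "\<Psi> k = norm (y k)^2/2 + inner (p (Suc k)) (y k) + inner (q k) (x k)" for k
  have D1: "\<Psi> k + norm (x k - y k)^2/2 \<le> \<Phi> k" for k
  proof -
    have "inner (p k) (y k - y (k-1)) \<le> 0" using NA yA by blast
    then show ?thesis unfolding \<Phi>_def \<Psi>_def ps
      by (simp add: power2_norm_eq_inner inner_diff_left inner_diff_right inner_add_left inner_add_right inner_commute; simp add: field_simps; linarith?)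
  qed
  have D2: "\<Phi> (Suc k) + norm (y k - x (Suc k))^2/2 \<le> \<Psi> k" for k
  proof -
    have "inner (q k) (x (Suc k) - x k) \<le> 0" using NB xB by blast
    then show ?thesis unfolding \<Phi>_def \<Psi>_def qs
      by (simp add: power2_norm_eq_inner inner_diff_left inner_diff_right inner_add_left inner_add_right inner_commute; simp add: field_simps; linarith?)
  qed
  define c where "c i = norm (x i - y i)^2" for i
  define e where "e i = norm (y i - x (Suc i))^2" for i
  have c0: "c i \<ge> 0" and e0: "e i \<ge> 0" for i by (simp_all add: c_def e_def)
  have dec: "\<Phi> (Suc k) \<le> \<Phi> k" for k using D1[of k] D2[of k] c0[of k] e0[of k] unfolding c_def e_def by linarith
  have \<Phi>sum: "\<Phi> k + (\<Sum>i<k. c i + e i)/2 \<le> \<Phi> 0" for k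
  proof (induction k)
    case 0 then show ?case by simp
  next
    case (Suc k) then show ?case using D1[of k] D2[of k] unfolding c_def e_def by (simp add: field_simps)
  qed
  have \<Phi>0: "\<Phi> 0 = norm (x 0)^2/2" by (simp add: \<Phi>_def p0 q0)
  have WDid: "\<Phi> k = norm (x 0)^2/2 - norm (z - x 0)^2/2 + norm (z - x k)^2/2
      + inner (p k) (y (k-1) - z) + inner (q k) (x k - z)" for z k
  proof -
    have x0e: "x 0 = x k + p k + q k" using inv by simp
    show ?thesis unfolding \<Phi>_def x0e
      by (simp add: power2_norm_eq_inner inner_diff_left inner_diff_right inner_add_left inner_add_right inner_commute; simp add: field_simps; linarith?)
  qed
  have WD: "norm (x 0)^2/2 - norm (z - x 0)^2/2 + norm (z - x k)^2/2 \<le> \<Phi> k" if "z \<in> A \<inter> B" for z k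
  proof -
    have "inner (p k) (z - y (k-1)) \<le> 0" "inner (q k) (z - x k) \<le> 0" using NA NB that by auto
    then have "inner (p k) (y (k-1) - z) \<ge> 0" "inner (q k) (x k - z) \<ge> 0"
      by (simp_all add: inner_diff_right)
    then show ?thesis using WDid[of k z] by linarith
  qed
  obtain z0 where z0: "z0 \<in> A \<inter> B" using ne by auto
  have sbound: "(\<Sum>i<k. c i + e i) \<le> norm (z0 - x 0)^2" for k
    using \<Phi>sum[of k] WD[OF z0, of k] \<Phi>0 zero_le_power2[of "norm (z0 - x k)"] by linarith
  have sce: "summable (\<lambda>i. c i + e i)"
  proof (rule bounded_imp_summable)
    show "0 \<le> c i + e i" for i using c0 e0 by (simp add: add_nonneg_nonneg)
    show "(\<Sum>i\<le>k. c i + e i) \<le> norm (z0 - x 0)^2" for k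
      using sbound[of "Suc k"] by (simp add: lessThan_Suc_atMost)
  qed
  have sc: "summable c" by (rule summable_comparison_test'[OF sce, where N=0]) (use c0 e0 in auto)
  have se: "summable e" by (rule summable_comparison_test'[OF sce, where N=0]) (use c0 e0 in auto)
  have lb: "\<forall>k. norm (x 0)^2/2 - norm (z0 - x 0)^2/2 \<le> \<Phi> k"
  proof
    fix k show "norm (x 0)^2/2 - norm (z0 - x 0)^2/2 \<le> \<Phi> k"
      using WD[OF z0, of k] zero_le_power2[of "norm (z0 - x k)"] by linarith
  qed
  have "decseq \<Phi>" using dec by (simp add: decseq_SucI)
  then obtain L where \<Phi>L: "\<Phi> \<longlonglongrightarrow> L" and Lle: "\<forall>k. L \<le> \<Phi> k"
    using decseq_convergent lb by blast
  have \<Phi>le0: "\<Phi> k \<le> \<Phi> 0" for k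
  proof -
    have "0 \<le> (\<Sum>i<k. c i + e i)" using c0 e0 by (simp add: sum_nonneg add_nonneg_nonneg)
    then show ?thesis using \<Phi>sum[of k] by linarith
  qed
  have xbd: "norm (z0 - x k) \<le> norm (z0 - x 0)" for k
  proof -
    have "norm (z0 - x k)^2 \<le> norm (z0 - x 0)^2" using WD[OF z0, of k] \<Phi>le0[of k] \<Phi>0 by linarith
    then show ?thesis by (rule power2_le_imp_le) simp
  qed
  have bdx: "bounded (range x)"
    unfolding bounded_iff
  proof (intro exI ballI)
    fix v assume "v \<in> range x"
    then obtain k where "v = x k" by auto
    have "norm (x k) \<le> norm z0 + norm (z0 - x k)" using norm_triangle_ineq4[of z0 "z0 - x k"] by simp
    then show "norm v \<le> norm z0 + norm (z0 - x 0)" unfolding \<open>v = x k\<close> using xbd[of k] by linarith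
  qed
  obtain g where g: "\<And>n. g n \<ge> n \<and> real (Suc (g n)) * e (g n) < 1 / real (Suc n)"
    using harmonic_liminf[OF e0 se] by metis
  have "bounded (range (\<lambda>n. x (Suc (g n))))"
    by (rule bounded_subset[OF bdx]) auto
  then obtain l h where h: "strict_mono h" and xl: "((\<lambda>n. x (Suc (g n))) \<circ> h) \<longlonglongrightarrow> l"
    using bounded_imp_convergent_subsequence by blast
  define u where "u j = g (h j)" for j
  have uge: "u j \<ge> j" for j using g[of "h j"] seq_suble[OF h, of j] unfolding u_def by linarith
  have xu: "(\<lambda>j. x (Suc (u j))) \<longlonglongrightarrow> l" using xl by (simp add: u_def comp_def)
  have eu: "(\<lambda>j. real (Suc (u j)) * e (u j)) \<longlonglongrightarrow> 0"
  proof (rule tendsto_sandwich[where f="\<lambda>_. 0" and h="\<lambda>j. inverse (real (Suc j))"])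
    show "\<forall>\<^sub>F j in sequentially. 0 \<le> real (Suc (u j)) * e (u j)" using e0 by simp
    show "\<forall>\<^sub>F j in sequentially. real (Suc (u j)) * e (u j) \<le> inverse (real (Suc j))"
    proof (rule always_eventually, rule allI)
      fix j
      have "real (Suc (u j)) * e (u j) < 1 / real (Suc (h j))" using g[of "h j"] unfolding u_def by simp
      also have "\<dots> \<le> 1 / real (Suc j)" using seq_suble[OF h, of j]
        by (simp add: frac_le)
      finally show "real (Suc (u j)) * e (u j) \<le> inverse (real (Suc j))" by (simp add: inverse_eq_divide)
    qed
  qed (rule tendsto_const LIMSEQ_inverse_real_of_nat)+
  have eu0: "(\<lambda>j. e (u j)) \<longlonglongrightarrow> 0"
  proof (rule tendsto_sandwich[where f="\<lambda>_. 0" and h="\<lambda>j. real (Suc (u j)) * e (u j)"])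
    show "\<forall>\<^sub>F j in sequentially. 0 \<le> e (u j)" using e0 by simp
    show "\<forall>\<^sub>F j in sequentially. e (u j) \<le> real (Suc (u j)) * e (u j)"
    proof (intro always_eventually allI)
      fix j show "e (u j) \<le> real (Suc (u j)) * e (u j)"
        using mult_right_mono[of 1 "real (Suc (u j))" "e (u j)"] e0[of "u j"] by simp
    qed
  qed (rule tendsto_const eu)+
  have yxu: "(\<lambda>j. y (u j) - x (Suc (u j))) \<longlonglongrightarrow> 0"
  proof -
    have "(\<lambda>j. sqrt (e (u j))) \<longlonglongrightarrow> sqrt 0" by (intro tendsto_real_sqrt eu0)
    then have "(\<lambda>j. norm (y (u j) - x (Suc (u j)))) \<longlonglongrightarrow> 0" by (simp add: e_def)
    then show ?thesis by (simp add: tendsto_norm_zero_iff)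
  qed
  have yu: "(\<lambda>j. y (u j)) \<longlonglongrightarrow> l"
  proof -
    have "(\<lambda>j. (y (u j) - x (Suc (u j))) + x (Suc (u j))) \<longlonglongrightarrow> 0 + l" by (intro tendsto_add yxu xu)
    then show ?thesis by simp
  qed
  have lB: "l \<in> B" using closed_sequentially[OF cB(1) _ xu] xB by blast
  have lA: "l \<in> A" using closed_sequentially[OF cA(1) _ yu] yA by blast
  have sufilt: "filterlim (\<lambda>j. Suc (u j)) sequentially sequentially"
    unfolding filterlim_at_top
  proof
    fix Z show "\<forall>\<^sub>F j in sequentially. Z \<le> Suc (u j)"
    proof -
      have "Z \<le> Suc (u j)" if "Z \<le> j" for j using that uge[of j] by linarith
      then show ?thesis by (rule eventually_mono[OF eventually_ge_at_top[of Z]])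
    qed
  qed
  have \<Phi>u: "(\<lambda>j. \<Phi> (Suc (u j))) \<longlonglongrightarrow> L" using filterlim_compose[OF \<Phi>L sufilt] .
  define S where "S = suminf c"
  have psum: "p k = (\<Sum>i<k. x i - y i)" for k by (induction k) (simp_all add: p0 ps)
  have cross: "\<bar>inner (p (Suc k)) (y k - x (Suc k))\<bar> \<le> sqrt (S * (real (Suc k) * e k))" for k
  proof -
    let ?m = "Suc k"
    have "norm (p ?m) \<le> (\<Sum>i<?m. norm (x i - y i))" unfolding psum by (rule norm_sum)
    moreover have "(\<Sum>i<?m. norm (x i - y i))^2 \<le> real ?m * S"
    proof -
      have cs: "(\<Sum>i<?m. 1 * norm (x i - y i))^2 \<le> (\<Sum>i<?m. 1^2) * (\<Sum>i<?m. (norm (x i - y i))^2)"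
        by (rule Cauchy_Schwarz_ineq_sum)
      have sS: "(\<Sum>i<?m. (norm (x i - y i))^2) \<le> S"
        unfolding S_def c_def[symmetric] by (rule sum_le_suminf[OF sc]) (use c0 in auto)
      have "(\<Sum>i<?m. (1::real)^2) * (\<Sum>i<?m. (norm (x i - y i))^2) \<le> real ?m * S"
        using mult_left_mono[OF sS, of "real (Suc k)"] by simp
      from order_trans[OF cs this] show ?thesis by simp
    qed
    ultimately have np: "norm (p ?m)^2 \<le> real ?m * S"
      using power_mono[of "norm (p ?m)" "\<Sum>i<?m. norm (x i - y i)" 2] by simp
    have "\<bar>inner (p ?m) (y k - x ?m)\<bar>^2 \<le> (norm (p ?m) * norm (y k - x ?m))^2"
      by (rule power_mono[OF Cauchy_Schwarz_ineq2]) simp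
    also have "\<dots> = norm (p ?m)^2 * e k" by (simp add: e_def power_mult_distrib)
    also have "\<dots> \<le> (real ?m * S) * e k" by (rule mult_right_mono[OF np e0])
    finally have "\<bar>inner (p ?m) (y k - x ?m)\<bar>^2 \<le> S * (real ?m * e k)" by (simp add: algebra_simps)
    then show ?thesis by (rule real_le_rsqrt)
  qed
  have crossu: "(\<lambda>j. inner (p (Suc (u j))) (y (u j) - x (Suc (u j)))) \<longlonglongrightarrow> 0"
  proof (rule Lim_null_comparison)
    show "\<forall>\<^sub>F j in sequentially. norm (inner (p (Suc (u j))) (y (u j) - x (Suc (u j)))) \<le> sqrt (S * (real (Suc (u j)) * e (u j)))"
      using cross by simp
    have "(\<lambda>j. sqrt (S * (real (Suc (u j)) * e (u j)))) \<longlonglongrightarrow> sqrt (S * 0)"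
      by (intro tendsto_real_sqrt tendsto_mult tendsto_const eu)
    then show "(\<lambda>j. sqrt (S * (real (Suc (u j)) * e (u j)))) \<longlonglongrightarrow> 0" by simp
  qed
  have ident: "\<Phi> (Suc k) = norm (x 0)^2/2 - norm (l - x 0)^2/2 + norm (l - x (Suc k))^2/2
      + inner (p (Suc k)) (y k - x (Suc k)) + inner (x 0 - x (Suc k)) (x (Suc k) - l)" for k
  proof -
    have x0e: "x 0 = x (Suc k) + p (Suc k) + q (Suc k)" using inv by simp
    show ?thesis unfolding \<Phi>_def x0e
      by (simp add: power2_norm_eq_inner inner_diff_left inner_diff_right inner_add_left inner_add_right inner_commute; simp add: field_simps; linarith?)
  qed
  have "(\<lambda>j. norm (x 0)^2/2 - norm (l - x 0)^2/2 + norm (l - x (Suc (u j)))^2/2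
      + inner (p (Suc (u j))) (y (u j) - x (Suc (u j))) + inner (x 0 - x (Suc (u j))) (x (Suc (u j)) - l))
      \<longlonglongrightarrow> norm (x 0)^2/2 - norm (l - x 0)^2/2 + norm (l - l)^2/2 + 0 + inner (x 0 - l) (l - l)"
    by (intro tendsto_intros xu crossu) auto
  then have "(\<lambda>j. \<Phi> (Suc (u j))) \<longlonglongrightarrow> norm (x 0)^2/2 - norm (l - x 0)^2/2"
    unfolding ident by simp
  then have Lval: "L = norm (x 0)^2/2 - norm (l - x 0)^2/2" using \<Phi>u LIMSEQ_unique by blast
  have lC: "l \<in> A \<inter> B" using lA lB by blast
  have "(\<lambda>k. norm (x k - l)^2) \<longlonglongrightarrow> 0"
  proof (rule tendsto_sandwich[where f="\<lambda>_. 0" and h="\<lambda>k. 2 * (\<Phi> k - L)"])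
    show "\<forall>\<^sub>F k in sequentially. 0 \<le> norm (x k - l)^2" by simp
    show "\<forall>\<^sub>F k in sequentially. norm (x k - l)^2 \<le> 2 * (\<Phi> k - L)"
    proof (intro always_eventually allI)
      fix k show "norm (x k - l)^2 \<le> 2 * (\<Phi> k - L)"
        using WD[OF lC, of k] Lval by (simp add: norm_minus_commute)
    qed
    have "(\<lambda>k. 2 * (\<Phi> k - L)) \<longlonglongrightarrow> 2 * (L - L)" by (intro tendsto_intros \<Phi>L)
    then show "(\<lambda>k. 2 * (\<Phi> k - L)) \<longlonglongrightarrow> 0" by simp
  qed auto
  then have "(\<lambda>k. sqrt (norm (x k - l)^2)) \<longlonglongrightarrow> sqrt 0" by (rule tendsto_real_sqrt)
  then have "(\<lambda>k. norm (x k - l)) \<longlonglongrightarrow> 0" by simp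
  then have conv: "x \<longlonglongrightarrow> l" by (simp add: tendsto_norm_zero_iff LIM_zero_iff)
  have opt: "dist (x 0) l \<le> dist (x 0) z" if "z \<in> A \<inter> B" for z
  proof -
    have "\<forall>n\<ge>0. norm (x 0)^2/2 - norm (z - x 0)^2/2 \<le> \<Phi> n"
    proof (intro allI impI)
      fix n show "norm (x 0)^2/2 - norm (z - x 0)^2/2 \<le> \<Phi> n"
        using WD[OF that, of n] zero_le_power2[of "norm (z - x n)"] by linarith
    qed
    then have "norm (x 0)^2/2 - norm (z - x 0)^2/2 \<le> L"
      by (intro LIMSEQ_le_const[OF \<Phi>L]) blast
    then have "norm (l - x 0)^2 \<le> norm (z - x 0)^2" using Lval by linarith
    then have "norm (l - x 0) \<le> norm (z - x 0)" by (rule power2_le_imp_le) simp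
    then show ?thesis by (simp add: dist_norm norm_minus_commute)
  qed
  show ?thesis using conv lC opt by blast
qed

theorem proposition2p2:
  fixes lam :: real
    and a :: "'n::finite \<Rightarrow> 'h::{real_inner, complete_space}"
    and xx :: "'n \<Rightarrow> 'h"
    and \<xi> :: "'n \<Rightarrow> real"
    and mum mup :: real
    and d r :: "'n \<Rightarrow> real"
    and \<beta> :: "real^'n"
    and x y p q :: "nat \<Rightarrow> real^'n"
  assumes lam_pos: "lam > 0"
    and a_nz: "\<And>i. a i \<noteq> 0"
    and d_def: "\<And>i. d i = lam * (norm (a i))\<^sup>2"
    and beta_def: "\<And>i. \<beta>$i = inner (a i) (xx i) + \<xi> i"
    and slater: "interior nonneg_orthant \<inter> interior (P3 \<xi> mum mup) \<inter> P1 \<noteq> {}"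
    and r_def: "\<And>i. r i = sqrt (d i)"
    and x0: "x 0 = diag_mult (\<lambda>i. inverse (r i)) \<beta>"
    and p0: "p 0 = 0"
    and q0: "q 0 = 0"
    and y_step: "\<And>k. y k = closest_point (diag_mult r ` P3 \<xi> mum mup) (x k + p k)"
    and p_step: "\<And>k. p (Suc k) = x k + p k - y k"
    and x_step: "\<And>k. x (Suc k) = closest_point (diag_mult r ` prob_simplex) (y k + q k)"
    and q_step: "\<And>k. q (Suc k) = y k + q k - x (Suc k)"
  shows "\<exists>qlim. x \<longlonglongrightarrow> qlim \<and>
           (let sol = diag_mult (\<lambda>i. inverse (r i)) qlim in
              sol \<in> prob_simplex \<inter> P3 \<xi> mum mup \<and>
              (\<forall>p' \<in> prob_simplex \<inter> P3 \<xi> mum mup. quad_obj d \<beta> sol \<le> quad_obj d \<beta> p') \<and>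
              (\<forall>p' \<in> prob_simplex \<inter> P3 \<xi> mum mup. quad_obj d \<beta> p' \<le> quad_obj d \<beta> sol \<longrightarrow> p' = sol))"
proof -
  have dpos: "d i > 0" for i using d_def lam_pos a_nz by simp
  have rpos: "r i > 0" for i using r_def dpos by simp
  have rsq: "r i * r i = d i" for i using r_def dpos[of i] by (simp add: less_imp_le)
  define M :: "real^'n \<Rightarrow> real^'n" where "M = diag_mult r"
  define Mi :: "real^'n \<Rightarrow> real^'n" where "Mi = diag_mult (\<lambda>i. inverse (r i))"
  have MiM: "Mi (M v) = v" for v using rpos unfolding M_def Mi_def diag_mult_def
    by (simp add: vec_eq_iff less_imp_neq[symmetric])
  have MMi: "M (Mi v) = v" for v using rpos unfolding M_def Mi_def diag_mult_def
    by (simp add: vec_eq_iff less_imp_neq[symmetric])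
  have linM: "linear M" unfolding M_def diag_mult_def
    by (intro linearI) (simp_all add: vec_eq_iff algebra_simps)
  have injM: "inj M" by (metis MiM injI)
  have P3eq: "P3 \<xi> mum mup = {v. inner (\<chi> i. \<xi> i) v \<ge> mum} \<inter> {v. inner (\<chi> i. \<xi> i) v \<le> mup}"
    unfolding P3_def inner_vec_def by (auto simp: mult.commute)
  have clP3: "closed (P3 \<xi> mum mup)" unfolding P3eq
    by (intro closed_Int closed_halfspace_le closed_halfspace_ge)
  have cvP3: "convex (P3 \<xi> mum mup)" unfolding P3eq
    by (intro convex_Int convex_halfspace_le convex_halfspace_ge)
  have clS: "closed (prob_simplex :: (real^'n) set)" unfolding prob_simplex_def
    by (intro closed_Collect_conj closed_Collect_all closed_Collect_le closed_Collect_eq continuous_intros)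
  have cvS: "convex (prob_simplex :: (real^'n) set)" unfolding prob_simplex_def convex_def
    by (auto simp: sum.distrib sum_distrib_left[symmetric])
  define A where "A = M ` P3 \<xi> mum mup"
  define B where "B = M ` prob_simplex"
  have cA: "closed A" "convex A" unfolding A_def
    using closed_injective_linear_image[OF clP3 linM injM] convex_linear_image[OF linM cvP3] by auto
  have cB: "closed B" "convex B" unfolding B_def
    using closed_injective_linear_image[OF clS linM injM] convex_linear_image[OF linM cvS] by auto
  obtain w where w: "w \<in> interior nonneg_orthant" "w \<in> interior (P3 \<xi> mum mup)" "w \<in> P1"
    using slater by auto
  have wS: "w \<in> prob_simplex \<inter> P3 \<xi> mum mup"
    using w interior_subset[of nonneg_orthant] interior_subset[of "P3 \<xi> mum mup"]
    unfolding prob_simplex_def nonneg_orthant_def P1_def by auto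
  have ne: "A \<inter> B \<noteq> {}" using wS unfolding A_def B_def by blast
  obtain l where xl: "x \<longlonglongrightarrow> l" and lC: "l \<in> A \<inter> B"
      and opt: "\<forall>z\<in>A \<inter> B. dist (x 0) l \<le> dist (x 0) z"
    using dykstra[OF cA cB ne p0 q0 y_step[folded M_def, folded A_def] p_step x_step[folded M_def, folded B_def] q_step]
    by blast
  define sol where "sol = Mi l"
  have Csol: "z \<in> A \<inter> B \<longleftrightarrow> Mi z \<in> prob_simplex \<inter> P3 \<xi> mum mup" for z
    unfolding A_def B_def by (metis IntE IntI MMi MiM image_iff)
  have CM: "M v \<in> A \<inter> B \<longleftrightarrow> v \<in> prob_simplex \<inter> P3 \<xi> mum mup" for v
    using Csol[of "M v"] MiM by simp
  have solS: "sol \<in> prob_simplex \<inter> P3 \<xi> mum mup" using lC Csol sol_def by blast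
  have Msol: "M sol = l" by (simp add: sol_def MMi)
  have x0M: "x 0 = Mi \<beta>" using x0 Mi_def by simp
  have qo: "quad_obj d \<beta> v = norm (M v - x 0)^2/2 - norm (x 0)^2/2" for v
  proof -
    have "norm (M v - x 0)^2/2 - norm (x 0)^2/2
        = (\<Sum>i\<in>UNIV. ((r i * v$i - inverse (r i) * \<beta>$i)^2 - (inverse (r i) * \<beta>$i)^2) / 2)"
      unfolding x0M M_def Mi_def diag_mult_def power2_norm_eq_inner inner_vec_def
      by (simp add: sum_subtractf diff_divide_distrib power2_eq_square sum_divide_distrib[symmetric])
    also have "\<dots> = (\<Sum>i\<in>UNIV. (1/2) * (v$i * (d i * v$i)) - v$i * \<beta>$i)"
    proof (rule sum.cong[OF refl])
      fix i
      have "r i \<noteq> 0" using rpos[of i] by simp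
      then show "((r i * v$i - inverse (r i) * \<beta>$i)^2 - (inverse (r i) * \<beta>$i)^2) / 2
          = (1/2) * (v$i * (d i * v$i)) - v$i * \<beta>$i"
        unfolding rsq[of i, symmetric] by (simp add: power2_eq_square field_simps)
    qed
    also have "\<dots> = quad_obj d \<beta> v"
      unfolding quad_obj_def diag_mult_def inner_vec_def
      by (simp add: sum_subtractf sum_distrib_left)
    finally show ?thesis by simp
  qed
  have optS: "quad_obj d \<beta> sol \<le> quad_obj d \<beta> p'" if "p' \<in> prob_simplex \<inter> P3 \<xi> mum mup" for p'
  proof -
    have "dist (x 0) l \<le> dist (x 0) (M p')" using opt CM that by blast
    then have "norm (M sol - x 0) \<le> norm (M p' - x 0)" using Msol by (simp add: dist_norm norm_minus_commute)
    then have "norm (M sol - x 0)^2 \<le> norm (M p' - x 0)^2" by (simp add: power_mono)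
    then show ?thesis unfolding qo by simp
  qed
  have uniq: "p' = sol" if "p' \<in> prob_simplex \<inter> P3 \<xi> mum mup" "quad_obj d \<beta> p' \<le> quad_obj d \<beta> sol" for p'
  proof -
    have "norm (M p' - x 0)^2 \<le> norm (M sol - x 0)^2" using that(2) unfolding qo by simp
    then have "norm (M p' - x 0) \<le> norm (M sol - x 0)" by (rule power2_le_imp_le) simp
    then have "dist (x 0) (M p') \<le> dist (x 0) l" using Msol by (simp add: dist_norm norm_minus_commute)
    then have o2: "\<forall>z\<in>A \<inter> B. dist (x 0) (M p') \<le> dist (x 0) z" using opt by force
    have "M p' = l"
      using any_closest_point_unique[OF convex_Int[OF cA(2) cB(2)] closed_Int[OF cA(1) cB(1)] _ lC o2 opt]
        CM that(1) by blast
    then show ?thesis using MiM sol_def by metis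
  qed
  show ?thesis
    using xl solS optS uniq unfolding Let_def sol_def Mi_def by blast
qed

end
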